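(* The separable closure $\mathbb F^{sep}$ of $\mathbb F$ is contained in $\mathcal U(\mathbb F)^{sep}_{ultra}=\prod_{s}\mathfrak F_s^{sep}/\mathcal D$. Equivalently, every $\alpha\in\mathbb F^{sep}$ can be written $\alpha=\mathrm{ulim}_s\alpha_s$ with $\alpha_s\in\mathfrak F_s^{sep}$ for $\mathcal D$-almost all $s$.
   Context: Let $S$ be an infinite set, $\mathcal D$ a nonprincipal ultrafilter on $S$; ultraproducts $\prod_sA_s/\mathcal D$ consist of tuples modulo agreement on a set in $\mathcal D$, with classes written $\mathrm{ulim}_sa_s$ and componentwise operations; "for $\mathcal D$-almost all $s$" means on a set belonging to $\mathcal D$. For each $s$ let $\mathbb F_s$ be a field, $\mathfrak F_s=\mathbb F_s(t)$; $\mathfrak K=\prod_s\mathbb F_s/\mathcal D$, $\mathbb F=\mathfrak K(t)$, viewed as a subfield of $\mathcal U(\mathbb F)=\prod_s\mathfrak F_s/\mathcal D$ via $\sum_i(\mathrm{ulim}_sa_{i,s})t^i\mapsto\mathrm{ulim}_s\sum_ia_{i,s}t^i$ (and quotients). For each $s$ fix an algebraic closure $\mathfrak F_s^{alg}$ and the separable closure $\mathfrak F_s^{sep}\subseteq\mathfrak F_s^{alg}$. Then $\mathcal U(\mathbb F)^{alg}_{ultra}=\prod_s\mathfrak F_s^{alg}/\mathcal D$ is an algebraically closed field containing $\mathcal U(\mathbb F)$; $\mathbb F^{alg}$ denotes the set of elements of $\mathcal U(\mathbb F)^{alg}_{ultra}$ algebraic over $\mathbb F$ (an algebraic closure of $\mathbb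 F$), and $\mathbb F^{sep}$ the separable closure of $\mathbb F$ inside $\mathbb F^{alg}$. *)

theory Defs
  imports "HOL-Algebra.Algebraic_Closure" "HOL-Algebra.Finite_Extensions" "HOL-Algebra.Generated_Fields"
begin

definition is_ultrafilter :: "'s filter \<Rightarrow> bool" where
  "is_ultrafilter D \<longleftrightarrow> D \<noteq> bot \<and> (\<forall>P. eventually P D \<or> eventually (\<lambda>x. \<not> P x) D)"

definition nonprincipal :: "'s filter \<Rightarrow> bool" where
  "nonprincipal D \<longleftrightarrow> (\<forall>x. \<not> eventually (\<lambda>y. y = x) D)"

definition ulim :: "'s filter \<Rightarrow> ('s \<Rightarrow> 'a) \<Rightarrow> ('s \<Rightarrow> 'a) set" where
  "ulim D f = {g. \<forall>\<^sub>F s in D. g s = f s}"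

definition urep :: "('s \<Rightarrow> 'a) set \<Rightarrow> 's \<Rightarrow> 'a" where
  "urep A = (SOME f. f \<in> A)"

definition ultraprod :: "('s \<Rightarrow> ('a, 'b) ring_scheme) \<Rightarrow> 's filter \<Rightarrow> ('s \<Rightarrow> 'a) set ring" where
  "ultraprod L D =
     \<lparr> carrier = ulim D ` {f. \<forall>s. f s \<in> carrier (L s)},
       monoid.mult = (\<lambda>A B. ulim D (\<lambda>s. urep A s \<otimes>\<^bsub>L s\<^esub> urep B s)),
       one = ulim D (\<lambda>s. \<one>\<^bsub>L s\<^esub>),
       zero = ulim D (\<lambda>s. \<zero>\<^bsub>L s\<^esub>),
       add = (\<lambda>A B. ulim D (\<lambda>s. urep A s \<oplus>\<^bsub>L s\<^esub> urep B s)) \<rparr>"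

text \<open>Formal derivative of a polynomial in HOL-Algebra list representation
  (highest coefficient first): [a_n, ..., a_0] maps to [n a_n, ..., 1 a_1].\<close>
definition lderiv :: "('a, 'b) ring_scheme \<Rightarrow> 'a list \<Rightarrow> 'a list" where
  "lderiv R p = map (\<lambda>(i, a). add_pow R i a) (zip (rev [1..<length p]) (butlast p))"

text \<open>x is separable (algebraic) over the subfield K of R: x is a root of a nonzero
  polynomial over K having no repeated root in R (R will always be algebraically closed,
  so this is "root of a separable polynomial over K").\<close>
definition separable_over :: "('a, 'b) ring_scheme \<Rightarrow> 'a set \<Rightarrow> 'a \<Rightarrow> bool" where
  "separable_over R K x \<longleftrightarrow> x \<in> carrier R \<and>
     (\<exists>p \<in> carrier (K[X]\<^bsub>R\<^esub>). p \<noteq> [] \<and> ring.eval R p x = \<zero>\<^bsub>R\<^esub> \<and>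
        (\<forall>y \<in> carrier R. ring.eval R p y = \<zero>\<^bsub>R\<^esub> \<longrightarrow> ring.eval R (lderiv R p) y \<noteq> \<zero>\<^bsub>R\<^esub>))"

end

theory Submission
  imports Defs
begin

lemma ulim_eq: "ulim D f = ulim D g \<longleftrightarrow> (\<forall>\<^sub>F s in D. f s = g s)"
proof
  assume "ulim D f = ulim D g"
  moreover have "f \<in> ulim D f" by (simp add: ulim_def)
  ultimately show "\<forall>\<^sub>F s in D. f s = g s" by (simp add: ulim_def)
next
  assume h: "\<forall>\<^sub>F s in D. f s = g s"
  show "ulim D f = ulim D g" unfolding ulim_def
  proof (rule Collect_cong, rule iffI)
    fix x assume "\<forall>\<^sub>F s in D. x s = f s"
    with h show "\<forall>\<^sub>F s in D. x s = g s" by (auto elim: eventually_elim2)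
  next
    fix x assume "\<forall>\<^sub>F s in D. x s = g s"
    with h show "\<forall>\<^sub>F s in D. x s = f s" by (auto elim: eventually_elim2)
  qed
qed

lemma ulim_cong: "(\<And>s. f s = g s) \<Longrightarrow> ulim D f = ulim D g"
  by metis

lemma urep_ulim: "\<forall>\<^sub>F s in D. urep (ulim D f) s = f s"
proof -
  have "f \<in> ulim D f" by (simp add: ulim_def)
  hence "urep (ulim D f) \<in> ulim D f" unfolding urep_def by (metis someI)
  thus ?thesis by (simp add: ulim_def)
qed

lemma U_add: "ulim D f \<oplus>\<^bsub>ultraprod L D\<^esub> ulim D g = ulim D (\<lambda>s. f s \<oplus>\<^bsub>L s\<^esub> g s)"
  using urep_ulim[of D f] urep_ulim[of D g]
  by (simp add: ultraprod_def ulim_eq) (auto elim: eventually_elim2)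

lemma U_mult: "ulim D f \<otimes>\<^bsub>ultraprod L D\<^esub> ulim D g = ulim D (\<lambda>s. f s \<otimes>\<^bsub>L s\<^esub> g s)"
  using urep_ulim[of D f] urep_ulim[of D g]
  by (simp add: ultraprod_def ulim_eq) (auto elim: eventually_elim2)

lemma U_zero: "\<zero>\<^bsub>ultraprod L D\<^esub> = ulim D (\<lambda>s. \<zero>\<^bsub>L s\<^esub>)"
  by (simp add: ultraprod_def)
lemma U_one: "\<one>\<^bsub>ultraprod L D\<^esub> = ulim D (\<lambda>s. \<one>\<^bsub>L s\<^esub>)"
  by (simp add: ultraprod_def)
lemma U_carrier: "carrier (ultraprod L D) = ulim D ` {f. \<forall>s. f s \<in> carrier (L s)}"
  by (simp add: ultraprod_def)

lemma U_carrierI: "(\<And>s. f s \<in> carrier (L s)) \<Longrightarrow> ulim D f \<in> carrier (ultraprod L D)"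
  by (simp add: U_carrier)

lemma U_carrierE:
  assumes "x \<in> carrier (ultraprod L D)"
  obtains f where "x = ulim D f" "\<And>s. f s \<in> carrier (L s)"
  using assms by (auto simp: U_carrier)


lemma U_ring:
  assumes R: "\<And>s. ring (L s)"
  shows "ring (ultraprod L D)"
proof (rule ringI)
  show "abelian_group (ultraprod L D)"
  proof (rule abelian_groupI)
    fix x y assume "x \<in> carrier (ultraprod L D)" "y \<in> carrier (ultraprod L D)"
    then show "x \<oplus>\<^bsub>(ultraprod L D)\<^esub> y \<in> carrier (ultraprod L D)" 
      apply - apply (elim U_carrierE) apply (simp add: U_add U_mult U_zero U_one) apply (rule U_carrierI) apply (simp add: ring.ring_simprules[OF R] monoid.r_one[OF ring.is_monoid[OF R]]) done
  next
    show "\<zero>\<^bsub>(ultraprod L D)\<^esub> \<in> carrier (ultraprod L D)"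
      by (simp add: U_zero, rule U_carrierI, simp add: ring.ring_simprules[OF R] monoid.r_one[OF ring.is_monoid[OF R]])
  next
    fix x y z assume "x \<in> carrier (ultraprod L D)" "y \<in> carrier (ultraprod L D)" "z \<in> carrier (ultraprod L D)"
    then show "x \<oplus>\<^bsub>(ultraprod L D)\<^esub> y \<oplus>\<^bsub>(ultraprod L D)\<^esub> z = x \<oplus>\<^bsub>(ultraprod L D)\<^esub> (y \<oplus>\<^bsub>(ultraprod L D)\<^esub> z)" 
      apply - apply (elim U_carrierE) apply (simp add: U_add U_mult U_zero U_one) apply (rule ulim_cong) apply (simp add: ring.ring_simprules[OF R] monoid.r_one[OF ring.is_monoid[OF R]]) done
  next
    fix x y assume "x \<in> carrier (ultraprod L D)" "y \<in> carrier (ultraprod L D)"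
    then show "x \<oplus>\<^bsub>(ultraprod L D)\<^esub> y = y \<oplus>\<^bsub>(ultraprod L D)\<^esub> x" 
      apply - apply (elim U_carrierE) apply (simp add: U_add U_mult U_zero U_one) apply (rule ulim_cong) apply (simp add: ring.ring_simprules[OF R] monoid.r_one[OF ring.is_monoid[OF R]]) done
  next
    fix x assume "x \<in> carrier (ultraprod L D)"
    then show "\<zero>\<^bsub>(ultraprod L D)\<^esub> \<oplus>\<^bsub>(ultraprod L D)\<^esub> x = x" 
      apply - apply (elim U_carrierE) apply (simp add: U_add U_mult U_zero U_one) apply (rule ulim_cong) apply (simp add: ring.ring_simprules[OF R] monoid.r_one[OF ring.is_monoid[OF R]]) done
  next
    fix x assume "x \<in> carrier (ultraprod L D)"
    then obtain f where f: "x = ulim D f" "\<And>s. f s \<in> carrier (L s)" by (auto elim: U_carrierE)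
    have "ulim D (\<lambda>s. \<ominus>\<^bsub>L s\<^esub> f s) \<in> carrier (ultraprod L D)"
      by (rule U_carrierI, simp add: ring.ring_simprules[OF R] f)
    moreover have "ulim D (\<lambda>s. \<ominus>\<^bsub>L s\<^esub> f s) \<oplus>\<^bsub>(ultraprod L D)\<^esub> x = \<zero>\<^bsub>(ultraprod L D)\<^esub>"
      by (simp add: f U_add U_zero, rule ulim_cong, simp add: ring.ring_simprules[OF R] f)
    ultimately show "\<exists>y\<in>carrier (ultraprod L D). y \<oplus>\<^bsub>(ultraprod L D)\<^esub> x = \<zero>\<^bsub>(ultraprod L D)\<^esub>" by blast
  qed
next
  show "Group.monoid (ultraprod L D)"
  proof (rule monoidI)
    fix x y assume "x \<in> carrier (ultraprod L D)" "y \<in> carrier (ultraprod L D)"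
    then show "x \<otimes>\<^bsub>(ultraprod L D)\<^esub> y \<in> carrier (ultraprod L D)" 
      apply - apply (elim U_carrierE) apply (simp add: U_add U_mult U_zero U_one) apply (rule U_carrierI) apply (simp add: ring.ring_simprules[OF R] monoid.r_one[OF ring.is_monoid[OF R]]) done
  next
    show "\<one>\<^bsub>(ultraprod L D)\<^esub> \<in> carrier (ultraprod L D)"
      by (simp add: U_one, rule U_carrierI, simp add: ring.ring_simprules[OF R] monoid.r_one[OF ring.is_monoid[OF R]])
  next
    fix x y z assume "x \<in> carrier (ultraprod L D)" "y \<in> carrier (ultraprod L D)" "z \<in> carrier (ultraprod L D)"
    then show "x \<otimes>\<^bsub>(ultraprod L D)\<^esub> y \<otimes>\<^bsub>(ultraprod L D)\<^esub> z = x \<otimes>\<^bsub>(ultraprod L D)\<^esub> (y \<otimes>\<^bsub>(ultraprod L D)\<^esub> z)" 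
      apply - apply (elim U_carrierE) apply (simp add: U_add U_mult U_zero U_one) apply (rule ulim_cong) apply (simp add: ring.ring_simprules[OF R] monoid.r_one[OF ring.is_monoid[OF R]]) done
  next
    fix x assume "x \<in> carrier (ultraprod L D)"
    then show "\<one>\<^bsub>(ultraprod L D)\<^esub> \<otimes>\<^bsub>(ultraprod L D)\<^esub> x = x" 
      apply - apply (elim U_carrierE) apply (simp add: U_add U_mult U_zero U_one) apply (rule ulim_cong) apply (simp add: ring.ring_simprules[OF R] monoid.r_one[OF ring.is_monoid[OF R]]) done
  next
    fix x assume "x \<in> carrier (ultraprod L D)"
    then show "x \<otimes>\<^bsub>(ultraprod L D)\<^esub> \<one>\<^bsub>(ultraprod L D)\<^esub> = x" 
      apply - apply (elim U_carrierE) apply (simp add: U_add U_mult U_zero U_one) apply (rule ulim_cong) apply (simp add: ring.ring_simprules[OF R] monoid.r_one[OF ring.is_monoid[OF R]]) done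
  qed
next
  fix x y z assume "x \<in> carrier (ultraprod L D)" "y \<in> carrier (ultraprod L D)" "z \<in> carrier (ultraprod L D)"
  then show "(x \<oplus>\<^bsub>(ultraprod L D)\<^esub> y) \<otimes>\<^bsub>(ultraprod L D)\<^esub> z = x \<otimes>\<^bsub>(ultraprod L D)\<^esub> z \<oplus>\<^bsub>(ultraprod L D)\<^esub> y \<otimes>\<^bsub>(ultraprod L D)\<^esub> z" 
      apply - apply (elim U_carrierE) apply (simp add: U_add U_mult U_zero U_one) apply (rule ulim_cong) apply (simp add: ring.ring_simprules[OF R] monoid.r_one[OF ring.is_monoid[OF R]]) done
next
  fix x y z assume "x \<in> carrier (ultraprod L D)" "y \<in> carrier (ultraprod L D)" "z \<in> carrier (ultraprod L D)"
  then show "z \<otimes>\<^bsub>(ultraprod L D)\<^esub> (x \<oplus>\<^bsub>(ultraprod L D)\<^esub> y) = z \<otimes>\<^bsub>(ultraprod L D)\<^esub> x \<oplus>\<^bsub>(ultraprod L D)\<^esub> z \<otimes>\<^bsub>(ultraprod L D)\<^esub> y" 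
      apply - apply (elim U_carrierE) apply (simp add: U_add U_mult U_zero U_one) apply (rule ulim_cong) apply (simp add: ring.ring_simprules[OF R] monoid.r_one[OF ring.is_monoid[OF R]]) done
qed

lemma U_pow: "ulim D f [^]\<^bsub>ultraprod L D\<^esub> (n::nat) = ulim D (\<lambda>s. f s [^]\<^bsub>L s\<^esub> n)"
  by (induct n) (simp_all add: U_one U_mult)
lemma U_add_pow: "[(n::nat)] \<cdot>\<^bsub>ultraprod L D\<^esub> ulim D f = ulim D (\<lambda>s. [n] \<cdot>\<^bsub>L s\<^esub> f s)"
  unfolding add_pow_def by (induct n) (simp_all add: U_zero U_add)
lemma U_eval:
  assumes R: "\<And>s. ring (L s)"
  shows "ring.eval (ultraprod L D) (map (ulim D) fs) (ulim D a) = ulim D (\<lambda>s. ring.eval (L s) (map (\<lambda>f. f s) fs) (a s))"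
  by (induct fs) (simp_all add: ring.eval.simps[OF U_ring[OF R]] ring.eval.simps[OF R] U_zero U_add U_mult U_pow)
lemma U_lderiv:
  "lderiv (ultraprod L D) (map (ulim D) fs) = map (ulim D) (map (\<lambda>(i,f) s. [i] \<cdot>\<^bsub>L s\<^esub> f s) (zip (rev [1..<length fs]) (butlast fs)))"
  unfolding lderiv_def by (simp add: map_butlast[symmetric] zip_map2 U_add_pow split_def)
lemma lderiv_comp:
  "map (\<lambda>g. g s) (map (\<lambda>(i,f) s. [i] \<cdot>\<^bsub>L s\<^esub> f s) (zip (rev [1..<length fs]) (butlast fs))) = lderiv (L s) (map (\<lambda>f. f s) fs)"
  unfolding lderiv_def by (simp add: map_butlast[symmetric] zip_map2 split_def)

lemma field_ring: "field R \<Longrightarrow> ring R"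
  using cring.axioms(1) domain.axioms(1) field.axioms(1) by blast

lemma uf_neg: "is_ultrafilter D \<Longrightarrow> \<not> eventually P D \<Longrightarrow> eventually (\<lambda>x. \<not> P x) D"
  unfolding is_ultrafilter_def by blast

lemma U_a_inv:
  assumes R: "\<And>s. ring (L s)" and f: "\<And>s. f s \<in> carrier (L s)"
  shows "\<ominus>\<^bsub>ultraprod L D\<^esub> ulim D f = ulim D (\<lambda>s. \<ominus>\<^bsub>L s\<^esub> f s)"
proof -
  interpret U: ring "ultraprod L D" by (rule U_ring[OF R])
  show ?thesis
  proof (rule U.minus_equality)
    show "ulim D (\<lambda>s. \<ominus>\<^bsub>L s\<^esub> f s) \<oplus>\<^bsub>ultraprod L D\<^esub> ulim D f = \<zero>\<^bsub>ultraprod L D\<^esub>"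
      by (simp add: U_add U_zero, rule ulim_cong, simp add: ring.ring_simprules[OF R] f)
    show "ulim D f \<in> carrier (ultraprod L D)" by (rule U_carrierI, rule f)
    show "ulim D (\<lambda>s. \<ominus>\<^bsub>L s\<^esub> f s) \<in> carrier (ultraprod L D)"
      by (rule U_carrierI, simp add: ring.ring_simprules[OF R] f)
  qed
qed

lemma U_m_inv:
  assumes F: "\<And>s. field (L s)" and f: "\<And>s. f s \<in> carrier (L s)"
    and nz: "\<forall>\<^sub>F s in D. f s \<noteq> \<zero>\<^bsub>L s\<^esub>"
  shows "inv\<^bsub>ultraprod L D\<^esub> ulim D f = ulim D (\<lambda>s. if f s = \<zero>\<^bsub>L s\<^esub> then \<zero>\<^bsub>L s\<^esub> else inv\<^bsub>L s\<^esub> f s)"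
proof -
  have R: "\<And>s. ring (L s)" using F field_ring by blast
  interpret U: ring "ultraprod L D" by (rule U_ring[OF R])
  have inv: "inv\<^bsub>L s\<^esub> f s \<in> carrier (L s) \<and> f s \<otimes>\<^bsub>L s\<^esub> inv\<^bsub>L s\<^esub> f s = \<one>\<^bsub>L s\<^esub> \<and> inv\<^bsub>L s\<^esub> f s \<otimes>\<^bsub>L s\<^esub> f s = \<one>\<^bsub>L s\<^esub>"
    if "f s \<noteq> \<zero>\<^bsub>L s\<^esub>" for s
    using ring.subfield_m_inv[OF R[of s] field.carrier_is_subfield[OF F[of s]], of "f s"] that f[of s] by auto
  show ?thesis
  proof (rule U.inv_char)
    show "ulim D f \<in> carrier (ultraprod L D)" by (rule U_carrierI, rule f)
    show "ulim D (\<lambda>s. if f s = \<zero>\<^bsub>L s\<^esub> then \<zero>\<^bsub>L s\<^esub> else inv\<^bsub>L s\<^esub> f s) \<in> carrier (ultraprod L D)"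
      by (rule U_carrierI) (use inv ring.ring_simprules(2)[OF R] in auto)
    show "ulim D f \<otimes>\<^bsub>ultraprod L D\<^esub> ulim D (\<lambda>s. if f s = \<zero>\<^bsub>L s\<^esub> then \<zero>\<^bsub>L s\<^esub> else inv\<^bsub>L s\<^esub> f s) = \<one>\<^bsub>ultraprod L D\<^esub>"
      unfolding U_mult U_one ulim_eq using nz by (rule eventually_mono) (use inv in auto)
    show "ulim D (\<lambda>s. if f s = \<zero>\<^bsub>L s\<^esub> then \<zero>\<^bsub>L s\<^esub> else inv\<^bsub>L s\<^esub> f s) \<otimes>\<^bsub>ultraprod L D\<^esub> ulim D f = \<one>\<^bsub>ultraprod L D\<^esub>"
      unfolding U_mult U_one ulim_eq using nz by (rule eventually_mono) (use inv in auto)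
  qed
qed

lemma U_nz:
  assumes UF: "is_ultrafilter D" and "ulim D f \<noteq> \<zero>\<^bsub>ultraprod L D\<^esub>"
  shows "\<forall>\<^sub>F s in D. f s \<noteq> \<zero>\<^bsub>L s\<^esub>"
  using assms(2) uf_neg[OF UF] by (simp add: U_zero ulim_eq)

lemma gen_in_W:
  assumes F: "\<And>s. field (L s)" and UF: "is_ultrafilter D"
    and G: "\<And>s. subfield (G s) (L s)"
    and H: "\<And>h. h \<in> H \<Longrightarrow> \<exists>f. h = ulim D f \<and> (\<forall>s. f s \<in> carrier (L s)) \<and> (\<forall>\<^sub>F s in D. f s \<in> G s)"
    and x: "x \<in> generate_field (ultraprod L D) H"
  shows "\<exists>f. x = ulim D f \<and> (\<forall>s. f s \<in> carrier (L s)) \<and> (\<forall>\<^sub>F s in D. f s \<in> G s)"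
  using x
proof (induction rule: generate_field.induct)
  have R: "\<And>s. ring (L s)" using F field_ring by blast
  case one
  show ?case
    by (rule exI[of _ "\<lambda>s. \<one>\<^bsub>L s\<^esub>"])
       (simp add: U_one ring.ring_simprules[OF R] subringE(3)[OF subfieldE(1)[OF G]])
next
  case (incl h) then show ?case by (rule H)
next
  have R: "\<And>s. ring (L s)" using F field_ring by blast
  case (a_inv h)
  then obtain f where f: "h = ulim D f" "\<forall>s. f s \<in> carrier (L s)" "\<forall>\<^sub>F s in D. f s \<in> G s" by blast
  show ?case
    by (rule exI[of _ "\<lambda>s. \<ominus>\<^bsub>L s\<^esub> f s"])
       (use f in \<open>auto simp: U_a_inv[OF R] ring.ring_simprules[OF R] subringE(5)[OF subfieldE(1)[OF G]]
         elim: eventually_mono\<close>)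
next
  have R: "\<And>s. ring (L s)" using F field_ring by blast
  case (m_inv h)
  then obtain f where f: "h = ulim D f" "\<forall>s. f s \<in> carrier (L s)" "\<forall>\<^sub>F s in D. f s \<in> G s" by blast
  have nz: "\<forall>\<^sub>F s in D. f s \<noteq> \<zero>\<^bsub>L s\<^esub>" using U_nz[OF UF] m_inv f by blast
  have inv: "inv\<^bsub>L s\<^esub> f s \<in> carrier (L s)" if "f s \<noteq> \<zero>\<^bsub>L s\<^esub>" for s
    using ring.subfield_m_inv[OF R[of s] field.carrier_is_subfield[OF F[of s]], of "f s"] that f by auto
  have invG: "inv\<^bsub>L s\<^esub> f s \<in> G s" if "f s \<noteq> \<zero>\<^bsub>L s\<^esub>" "f s \<in> G s" for s
    using ring.subfield_m_inv[OF R[of s] G[of s], of "f s"] that by auto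
  show ?case
    apply (rule exI[of _ "\<lambda>s. if f s = \<zero>\<^bsub>L s\<^esub> then \<zero>\<^bsub>L s\<^esub> else inv\<^bsub>L s\<^esub> f s"])
  proof (intro conjI allI)
    show "inv\<^bsub>ultraprod L D\<^esub> h = ulim D (\<lambda>s. if f s = \<zero>\<^bsub>L s\<^esub> then \<zero>\<^bsub>L s\<^esub> else inv\<^bsub>L s\<^esub> f s)"
      using f nz by (simp add: U_m_inv[OF F])
    fix s show "(if f s = \<zero>\<^bsub>L s\<^esub> then \<zero>\<^bsub>L s\<^esub> else inv\<^bsub>L s\<^esub> f s) \<in> carrier (L s)"
      using inv ring.ring_simprules(2)[OF R] by auto
  next
    show "\<forall>\<^sub>F s in D. (if f s = \<zero>\<^bsub>L s\<^esub> then \<zero>\<^bsub>L s\<^esub> else inv\<^bsub>L s\<^esub> f s) \<in> G s"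
      using eventually_conj[OF f(3) nz] by (rule eventually_mono) (use invG in auto)
  qed
next
  have R: "\<And>s. ring (L s)" using F field_ring by blast
  case (eng_add h1 h2)
  then obtain f g where f: "h1 = ulim D f" "\<forall>s. f s \<in> carrier (L s)" "\<forall>\<^sub>F s in D. f s \<in> G s"
    and g: "h2 = ulim D g" "\<forall>s. g s \<in> carrier (L s)" "\<forall>\<^sub>F s in D. g s \<in> G s" by blast
  show ?case
    apply (rule exI[of _ "\<lambda>s. f s \<oplus>\<^bsub>L s\<^esub> g s"])
  proof (intro conjI allI)
    show "\<forall>\<^sub>F s in D. f s \<oplus>\<^bsub>L s\<^esub> g s \<in> G s"
      using eventually_conj[OF f(3) g(3)] by (rule eventually_mono) (use subringE(7)[OF subfieldE(1)[OF G]] in blast)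
  qed (use f g in \<open>auto simp: U_add ring.ring_simprules[OF R]\<close>)
next
  have R: "\<And>s. ring (L s)" using F field_ring by blast
  case (eng_mult h1 h2)
  then obtain f g where f: "h1 = ulim D f" "\<forall>s. f s \<in> carrier (L s)" "\<forall>\<^sub>F s in D. f s \<in> G s"
    and g: "h2 = ulim D g" "\<forall>s. g s \<in> carrier (L s)" "\<forall>\<^sub>F s in D. g s \<in> G s" by blast
  show ?case
    apply (rule exI[of _ "\<lambda>s. f s \<otimes>\<^bsub>L s\<^esub> g s"])
  proof (intro conjI allI)
    show "\<forall>\<^sub>F s in D. f s \<otimes>\<^bsub>L s\<^esub> g s \<in> G s"
      using eventually_conj[OF f(3) g(3)] by (rule eventually_mono) (use subringE(6)[OF subfieldE(1)[OF G]] in blast)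
  qed (use f g in \<open>auto simp: U_mult ring.ring_simprules[OF R]\<close>)
qed

theorem mainTheorem4:
  fixes L :: "'s \<Rightarrow> 'a ring" and Fk :: "'s \<Rightarrow> 'a set" and tt :: "'s \<Rightarrow> 'a"
    and D :: "'s filter"
  assumes "infinite (UNIV :: 's set)"
    and "is_ultrafilter D" and "nonprincipal D"
    and "\<And>s. subfield (Fk s) (L s)"
    and "\<And>s. tt s \<in> carrier (L s)"
    and "\<And>s. ring.transcendental (L s) (Fk s) (tt s)"
    and "\<And>s. algebraic_closure (L s) (generate_field (L s) (Fk s \<union> {tt s}))"
  shows "{\<alpha>. separable_over (ultraprod L D)
               (generate_field (ultraprod L D) (ulim D ` {f. \<forall>s. f s \<in> Fk s} \<union> {ulim D tt})) \<alpha>}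
         \<subseteq> {ulim D \<beta> | \<beta>. \<forall>\<^sub>F s in D.
               separable_over (L s) (generate_field (L s) (Fk s \<union> {tt s})) (\<beta> s)}"
proof
  define U where "U = ultraprod L D"
  define G where "G s = generate_field (L s) (Fk s \<union> {tt s})" for s
  define K where "K = generate_field U (ulim D ` {f. \<forall>s. f s \<in> Fk s} \<union> {ulim D tt})"
  have UF: "is_ultrafilter D" by (rule assms(2))
  have F: "\<And>s. field (L s)" using algebraic_closure.axioms(1)[OF assms(7)] .
  have R: "\<And>s. ring (L s)" by (rule field_ring[OF F])
  have sub: "Fk s \<union> {tt s} \<subseteq> carrier (L s)" for s
    using subfieldE(3)[OF assms(4)[of s]] assms(5)[of s] by auto
  have G: "\<And>s. subfield (G s) (L s)"
    unfolding G_def using field.generate_field_is_subfield[OF F sub] .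
  have inG: "Fk s \<union> {tt s} \<subseteq> G s" for s
    unfolding G_def by (auto intro: generate_field.incl)
  have KW: "\<exists>f. x = ulim D f \<and> (\<forall>s. f s \<in> carrier (L s)) \<and> (\<forall>\<^sub>F s in D. f s \<in> G s)"
    if "x \<in> K" for x
  proof (rule gen_in_W[OF F UF G])
    show "x \<in> generate_field (ultraprod L D) (ulim D ` {f. \<forall>s. f s \<in> Fk s} \<union> {ulim D tt})"
      using that by (simp add: K_def U_def)
  next
    fix h assume "h \<in> ulim D ` {f. \<forall>s. f s \<in> Fk s} \<union> {ulim D tt}"
    then show "\<exists>f. h = ulim D f \<and> (\<forall>s. f s \<in> carrier (L s)) \<and> (\<forall>\<^sub>F s in D. f s \<in> G s)"
    proof
      assume "h \<in> ulim D ` {f. \<forall>s. f s \<in> Fk s}"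
      then obtain f where f: "h = ulim D f" "\<forall>s. f s \<in> Fk s" by blast
      have "\<forall>s. f s \<in> G s" "\<forall>s. f s \<in> carrier (L s)" using f(2) inG sub by blast+
      then show ?thesis using f(1) by (intro exI[of _ f]) (auto intro!: always_eventually)
    next
      assume "h \<in> {ulim D tt}"
      then show ?thesis using sub inG by (intro exI[of _ tt]) (auto intro!: always_eventually)
    qed
  qed
  fix \<alpha> assume "\<alpha> \<in> {\<alpha>. separable_over (ultraprod L D)
               (generate_field (ultraprod L D) (ulim D ` {f. \<forall>s. f s \<in> Fk s} \<union> {ulim D tt})) \<alpha>}"
  then have "separable_over U K \<alpha>" by (simp add: U_def K_def)
  then obtain p where \<alpha>C: "\<alpha> \<in> carrier U" and pC: "p \<in> carrier (K[X]\<^bsub>U\<^esub>)" and pne: "p \<noteq> []"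
    and p0: "ring.eval U p \<alpha> = \<zero>\<^bsub>U\<^esub>"
    and sepU: "\<forall>y \<in> carrier U. ring.eval U p y = \<zero>\<^bsub>U\<^esub> \<longrightarrow> ring.eval U (lderiv U p) y \<noteq> \<zero>\<^bsub>U\<^esub>"
    unfolding separable_over_def by blast
  have pK: "set p \<subseteq> K" and phd: "hd p \<noteq> \<zero>\<^bsub>U\<^esub>"
    using pC pne by (auto simp: univ_poly_def polynomial_def)
  define Fc where "Fc c = (SOME f. ulim D f = c \<and> (\<forall>s. f s \<in> carrier (L s)) \<and> (\<forall>\<^sub>F s in D. f s \<in> G s))" for c
  have Fc: "ulim D (Fc c) = c \<and> (\<forall>s. Fc c s \<in> carrier (L s)) \<and> (\<forall>\<^sub>F s in D. Fc c s \<in> G s)"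
    if "c \<in> set p" for c
  proof -
    have "\<exists>f. ulim D f = c \<and> (\<forall>s. f s \<in> carrier (L s)) \<and> (\<forall>\<^sub>F s in D. f s \<in> G s)"
      using KW[of c] pK that by (metis subsetD)
    from someI_ex[OF this] show ?thesis unfolding Fc_def .
  qed
  define fs where "fs = map Fc p"
  have pfs: "map (ulim D) fs = p"
    unfolding fs_def by (simp, rule map_idI) (use Fc in auto)
  obtain a where a: "\<alpha> = ulim D a" "\<And>s. a s \<in> carrier (L s)"
    using \<alpha>C unfolding U_def by (auto elim: U_carrierE)
  define ps where "ps s = map (\<lambda>f. f s) fs" for s
  have ev1: "\<forall>\<^sub>F s in D. \<forall>f\<in>set fs. f s \<in> G s"
    by (rule eventually_ball_finite) (use Fc in \<open>auto simp: fs_def\<close>)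
  have ev2: "\<forall>\<^sub>F s in D. ring.eval (L s) (ps s) (a s) = \<zero>\<^bsub>L s\<^esub>"
    using p0 unfolding U_def a(1) pfs[symmetric] U_eval[OF R] U_zero ulim_eq ps_def .
  have fsne: "fs \<noteq> []" using pne by (simp add: fs_def)
  have "ulim D (hd fs) \<noteq> \<zero>\<^bsub>U\<^esub>" using phd pfs fsne by (metis hd_map)
  then have ev3: "\<forall>\<^sub>F s in D. hd (ps s) \<noteq> \<zero>\<^bsub>L s\<^esub>"
    using U_nz[OF UF] fsne unfolding U_def ps_def by (simp add: hd_map)
  define Q where "Q s = (\<forall>y\<in>carrier (L s). ring.eval (L s) (ps s) y = \<zero>\<^bsub>L s\<^esub> \<longrightarrow>
      ring.eval (L s) (lderiv (L s) (ps s)) y \<noteq> \<zero>\<^bsub>L s\<^esub>)" for s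
  have ev4: "\<forall>\<^sub>F s in D. Q s"
  proof (rule ccontr)
    assume "\<not> (\<forall>\<^sub>F s in D. Q s)"
    then have nQ: "\<forall>\<^sub>F s in D. \<not> Q s" by (rule uf_neg[OF UF])
    define P where "P s y = (y \<in> carrier (L s) \<and> ring.eval (L s) (ps s) y = \<zero>\<^bsub>L s\<^esub> \<and>
      ring.eval (L s) (lderiv (L s) (ps s)) y = \<zero>\<^bsub>L s\<^esub>)" for s y
    define y where "y s = (if \<exists>z. P s z then SOME z. P s z else \<zero>\<^bsub>L s\<^esub>)" for s
    have yP: "P s (y s)" if "\<not> Q s" for s
    proof -
      have "\<exists>z. P s z" using that by (auto simp: Q_def P_def)
      then show ?thesis unfolding y_def by (simp add: someI_ex)
    qed
    have yC: "y s \<in> carrier (L s)" for s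
    proof (cases "\<exists>z. P s z")
      case True
      then have Ps: "P s (SOME z. P s z)" by (rule someI_ex)
      have e: "y s = (SOME z. P s z)" using True unfolding y_def by simp
      show ?thesis using Ps unfolding e P_def by blast
    next
      case False
      then show ?thesis using ring.ring_simprules(2)[OF R] by (simp add: y_def)
    qed
    have YC: "ulim D y \<in> carrier U" unfolding U_def by (rule U_carrierI, rule yC)
    have "ring.eval U p (ulim D y) = \<zero>\<^bsub>U\<^esub>"
      unfolding U_def pfs[symmetric] U_eval[OF R] U_zero ulim_eq
      using nQ by (rule eventually_mono) (use yP in \<open>auto simp: P_def ps_def\<close>)
    moreover have "ring.eval U (lderiv U p) (ulim D y) = \<zero>\<^bsub>U\<^esub>"
      unfolding U_def pfs[symmetric] U_lderiv U_eval[OF R] U_zero ulim_eq lderiv_comp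
      using nQ by (rule eventually_mono) (use yP in \<open>auto simp: P_def ps_def\<close>)
    ultimately show False using sepU YC by blast
  qed
  have "\<forall>\<^sub>F s in D. separable_over (L s) (G s) (a s)"
    using eventually_conj[OF ev1 eventually_conj[OF ev2 eventually_conj[OF ev3 ev4]]]
  proof (rule eventually_mono)
    fix s assume h: "(\<forall>f\<in>set fs. f s \<in> G s) \<and> ring.eval (L s) (ps s) (a s) = \<zero>\<^bsub>L s\<^esub> \<and>
      hd (ps s) \<noteq> \<zero>\<^bsub>L s\<^esub> \<and> Q s"
    have "ps s \<in> carrier ((G s)[X]\<^bsub>L s\<^esub>)"
      using h by (auto simp: univ_poly_def polynomial_def ps_def)
    moreover have "ps s \<noteq> []" using fsne by (simp add: ps_def)
    ultimately show "separable_over (L s) (G s) (a s)"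
      unfolding separable_over_def using a(2) h by (auto simp: Q_def)
  qed
  then show "\<alpha> \<in> {ulim D \<beta> | \<beta>. \<forall>\<^sub>F s in D.
               separable_over (L s) (generate_field (L s) (Fk s \<union> {tt s})) (\<beta> s)}"
    using a(1) unfolding G_def by blast
qed
end
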